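(* Consider one of the three families (bucket recursive trees, $(b,d)$-ary increasing trees, $(b,\alpha)$-PORTs) generated by the growth process. Let $j\ge1$ and $\ell\in\{1,\dots,b\}$ with $\mathbb P\{K_j=\ell\}>0$, and let $Y_{n,\ell,j}$ denote $Y_{n,j}$ conditioned on $K_j=\ell$, for $n\ge j$. For $i\ge j$ let $A_{i,\ell,j}$ be the indicator (under the same conditioning) that label $i$ is a descendant of label $j$. Then $A_{j,\ell,j}=1$, $$Y_{n,\ell,j}=\sum_{i=j}^nA_{i,\ell,j},$$ and for $i\ge j$, $$\mathbb P\{A_{i+1,\ell,j}=1\mid Y_{i,\ell,j}\}=\begin{cases}\frac{\ell-1+Y_{i,\ell,j}}{i},&\text{bucket recursive trees},\\ \frac{(d-1)(\ell-1+Y_{i,\ell,j})+1}{(d-1)i+1},&\text{$(b,d)$-ary increasing trees},\\ \frac{(\alpha+1)(\ell-1+Y_{i,\ell,j})-1}{(\alpha+1)i-1},&\text{$(b,\alpha)$-PORTs}.\end{cases}$$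
   Context: Fix $b\ge1$. A bucket tree is a rooted unordered tree whose nodes ("buckets") $v$ contain $c(v)\in\{1,\dots,b\}$ labels (capacity); $v$ is saturated if $c(v)=b$, and every node with a child is saturated; $d^+(v)$ is its number of children; the size is the total number of labels. Growth process: start with a root bucket containing label 1; given the tree of size $n\ge1$, choose a node $v$ with probability $p(v)$; if $v$ is unsaturated, add label $n+1$ to $v$, otherwise attach to $v$ a new child bucket containing only $n+1$. Families: bucket recursive trees $p(v)=c(v)/n$; $(b,d)$-ary increasing trees ($d\ge2$ integer) $p(v)=\frac{(d-1)c(v)+1-d^+(v)}{(d-1)n+1}$; $(b,\alpha)$-plane oriented recursive trees, $(b,\alpha)$-PORTs ($\alpha>0$) $p(v)=\frac{d^+(v)+(\alpha+1)c(v)-1}{(\alpha+1)n-1}$ (capacities and out-degrees in the current tree of size $n$). $K_j$ is the capacity of the bucket containing label $j$ in the tree of size $j$ (its initial bucket size). $Y_{n,j}$ (number of descendants of label $j$) is the number of labels $\ge j$ contained in the subtree rooted at the bucket containing label $j$, in the tree of size $n$; a label $i\ge j$ is a descendant of $j$ if it is counted there. *)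

theory Defs
  imports "HOL-Probability.Probability_Mass_Function"
begin

text \<open>
A bucket tree of size n grown by the process is encoded by its history
h :: nat list of length n-1: the entry h!(k-2) is the bucket chosen at the step
that inserted label k (k = 2..n). Each bucket is identified by the smallest label
it contains (the label that created it); the root bucket has id 1.
\<close>

function bkt :: "nat \<Rightarrow> nat list \<Rightarrow> nat \<Rightarrow> nat" where
  "bkt b h k =
     (if k \<le> 1 then 1
      else (let c = h ! (k - 2)
            in if length (filter (\<lambda>m. bkt b h m = c) [1..<k]) < b then c else k))"
  by pat_completeness auto
termination
  by (relation "Wellfounded.measure (\<lambda>(b, h, k). k)") auto

declare bkt.simps[simp del]

definition buckets :: "nat \<Rightarrow> nat list \<Rightarrow> nat \<Rightarrow> nat set" where
  "buckets b h n = {v \<in> {1..n}. bkt b h v = v}"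

definition cap :: "nat \<Rightarrow> nat list \<Rightarrow> nat \<Rightarrow> nat \<Rightarrow> nat" where
  "cap b h n v = card {m \<in> {1..n}. bkt b h m = v}"

definition outdeg :: "nat \<Rightarrow> nat list \<Rightarrow> nat \<Rightarrow> nat \<Rightarrow> nat" where
  "outdeg b h n v = card {m \<in> {2..n}. bkt b h m = m \<and> h ! (m - 2) = v}"

datatype family = BRT | Dary nat | PORT real

definition valid_family :: "family \<Rightarrow> bool" where
  "valid_family fam = (case fam of BRT \<Rightarrow> True | Dary d \<Rightarrow> d \<ge> 2 | PORT \<alpha> \<Rightarrow> \<alpha> > 0)"

definition weight :: "family \<Rightarrow> nat \<Rightarrow> nat list \<Rightarrow> nat \<Rightarrow> nat \<Rightarrow> real" where
  "weight fam b h n v = (case fam of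
      BRT \<Rightarrow> real (cap b h n v) / real n
    | Dary d \<Rightarrow> ((real d - 1) * real (cap b h n v) + 1 - real (outdeg b h n v))
                / ((real d - 1) * real n + 1)
    | PORT \<alpha> \<Rightarrow> (real (outdeg b h n v) + (\<alpha> + 1) * real (cap b h n v) - 1)
                / ((\<alpha> + 1) * real n - 1))"

definition choose_bucket :: "family \<Rightarrow> nat \<Rightarrow> nat list \<Rightarrow> nat \<Rightarrow> nat pmf" where
  "choose_bucket fam b h n =
     pmf_of_list (map (\<lambda>v. (v, weight fam b h n v))
                      (filter (\<lambda>v. bkt b h v = v) [1..<Suc n]))"

primrec tree_pmf :: "family \<Rightarrow> nat \<Rightarrow> nat \<Rightarrow> nat list pmf" where
  "tree_pmf fam b 0 = return_pmf []"
| "tree_pmf fam b (Suc n) =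
     (if n = 0 then return_pmf []
      else bind_pmf (tree_pmf fam b n)
             (\<lambda>h. map_pmf (\<lambda>v. h @ [v]) (choose_bucket fam b h n)))"

text \<open>Bucket r is an ancestor-or-self of bucket c (parent of bucket c \<ge> 2 is h!(c-2)).\<close>
inductive in_subtree :: "nat \<Rightarrow> nat list \<Rightarrow> nat \<Rightarrow> nat \<Rightarrow> bool" for b h where
  self: "in_subtree b h r r"
| step: "\<lbrakk>c \<ge> 2; bkt b h c = c; in_subtree b h r (h ! (c - 2))\<rbrakk> \<Longrightarrow> in_subtree b h r c"

definition desc :: "nat \<Rightarrow> nat list \<Rightarrow> nat \<Rightarrow> nat \<Rightarrow> bool" where
  "desc b h j i = (j \<le> i \<and> in_subtree b h (bkt b h j) (bkt b h i))"

definition Aind :: "nat \<Rightarrow> nat list \<Rightarrow> nat \<Rightarrow> nat \<Rightarrow> nat" where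
  "Aind b h j i = (if desc b h j i then 1 else 0)"

definition Ydesc :: "nat \<Rightarrow> nat list \<Rightarrow> nat \<Rightarrow> nat \<Rightarrow> nat" where
  "Ydesc b h n j = card {i \<in> {j..n}. desc b (take (n - 1) h) j i}"

definition Kcap :: "nat \<Rightarrow> nat list \<Rightarrow> nat \<Rightarrow> nat" where
  "Kcap b h j = (let h' = take (j - 1) h in cap b h' j (bkt b h' j))"

definition cond_formula :: "family \<Rightarrow> nat \<Rightarrow> nat \<Rightarrow> nat \<Rightarrow> real" where
  "cond_formula fam l i y = (case fam of
      BRT \<Rightarrow> (real l - 1 + real y) / real i
    | Dary d \<Rightarrow> ((real d - 1) * (real l - 1 + real y) + 1) / ((real d - 1) * real i + 1)
    | PORT \<alpha> \<Rightarrow> ((\<alpha> + 1) * (real l - 1 + real y) - 1) / ((\<alpha> + 1) * real i - 1))"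

end

theory Submission
  imports Defs
begin


definition valid :: "nat \<Rightarrow> nat list \<Rightarrow> nat \<Rightarrow> bool" where
  "valid b h n = (length h = n - 1 \<and> (\<forall>k. 2 \<le> k \<and> k \<le> n \<longrightarrow>
      1 \<le> h!(k-2) \<and> h!(k-2) < k \<and> bkt b h (h!(k-2)) = h!(k-2)))"

lemma len_filter_upt: "length (filter P [a..<c]) = card {m \<in> {a..<c}. P m}"
  by (subst distinct_card[symmetric]) auto

lemma bkt_eq: "bkt b h k = (if k \<le> 1 then 1 else if card {m \<in> {1..<k}. bkt b h m = h!(k-2)} < b then h!(k-2) else k)"
  by (subst bkt.simps) (simp add: len_filter_upt Let_def)

lemma bkt_1[simp]: "bkt b h (Suc 0) = 1" "bkt b h 1 = 1" "bkt b h 0 = 1"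
  by (subst bkt_eq; simp)+

lemma bkt_cong:
  assumes "\<forall>k. 2 \<le> k \<and> k \<le> K \<longrightarrow> h!(k-2) = h'!(k-2)"
  shows "m \<le> K \<Longrightarrow> bkt b h m = bkt b h' m"
proof (induction m rule: less_induct)
  case (less m)
  show ?case
  proof (cases "m \<le> 1")
    case True then show ?thesis by (simp add: bkt_eq[of b h m] bkt_eq[of b h' m])
  next
    case False
    have e: "h!(m-2) = h'!(m-2)" using assms less.prems False by auto
    have "{x \<in> {1..<m}. bkt b h x = h!(m-2)} = {x \<in> {1..<m}. bkt b h' x = h'!(m-2)}"
      using less.IH less.prems e by auto
    then show ?thesis using False e by (simp add: bkt_eq[of b h m] bkt_eq[of b h' m])
  qed
qed

lemma bkt_props:
  assumes "valid b h n" "1 \<le> m" "m \<le> n"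
  shows "1 \<le> bkt b h m \<and> bkt b h m \<le> m \<and> bkt b h (bkt b h m) = bkt b h m"
proof (cases "m \<le> 1")
  case True
  then have "m = 1" using assms by auto
  then show ?thesis by simp
next
  case False
  have v: "1 \<le> h!(m-2)" "h!(m-2) < m" "bkt b h (h!(m-2)) = h!(m-2)"
    using assms False unfolding valid_def by auto
  show ?thesis
  proof (cases "bkt b h m = m")
    case True then show ?thesis using assms by simp
  next
    case F2: False
    then have "bkt b h m = h!(m-2)" using False by (auto simp: bkt_eq[of b h m] split: if_splits)
    then show ?thesis using v by simp
  qed
qed

lemma ins_le:
  assumes "valid b h n"
  shows "in_subtree b h r x \<Longrightarrow> x \<le> n \<Longrightarrow> r \<le> x"
proof (induction rule: in_subtree.induct)
  case self then show ?case by simp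
next
  case (step c)
  have "h!(c-2) < c" using assms step unfolding valid_def by auto
  then show ?case using step by auto
qed

lemma ins_child:
  assumes "valid b h n"
  shows "in_subtree b h r x \<Longrightarrow> x \<le> n \<Longrightarrow> x \<noteq> r \<Longrightarrow>
         \<exists>c. 2 \<le> c \<and> c \<le> x \<and> bkt b h c = c \<and> h!(c-2) = r"
proof (induction rule: in_subtree.induct)
  case self then show ?case by simp
next
  case (step c r0)
  have lt: "h!(c-2) < c" using assms step unfolding valid_def by auto
  show ?case
  proof (cases "h!(c-2) = r0")
    case True then show ?thesis using step by auto
  next
    case False
    then obtain c' where "2 \<le> c'" "c' \<le> h!(c-2)" "bkt b h c' = c'" "h!(c'-2) = r0"
      using step lt by auto
    then show ?thesis using lt by (intro exI[of _ c']) auto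
  qed
qed

lemma ins_cong:
  assumes agree: "\<forall>k. 2 \<le> k \<and> k \<le> K \<longrightarrow> h!(k-2) = h'!(k-2)"
    and par: "\<forall>k. 2 \<le> k \<and> k \<le> K \<longrightarrow> h!(k-2) < k"
  shows "in_subtree b h r x \<Longrightarrow> x \<le> K \<Longrightarrow> in_subtree b h' r x"
proof (induction rule: in_subtree.induct)
  case (self r0) show ?case by (rule in_subtree.self)
next
  case (step c r0)
  have cK: "c \<le> K" "2 \<le> c" using step.prems step.hyps(1) by auto
  have lt: "h!(c-2) < c" using par cK by blast
  have e: "h'!(c-2) = h!(c-2)" using agree cK by metis
  have "bkt b h c = bkt b h' c" using bkt_cong[OF agree cK(1)] .
  then have b1: "bkt b h' c = c" using step.hyps(2) by simp
  have "in_subtree b h r0 (h!(c-2))" using step.hyps(3) .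
  have "in_subtree b h' r0 (h!(c-2))" using step.IH lt cK by simp
  then have i2: "in_subtree b h' r0 (h'!(c-2))" using e by simp
  show ?case by (rule in_subtree.step[OF cK(2) b1 i2])
qed




lemma valid_par: "valid b h n \<Longrightarrow> 2 \<le> k \<Longrightarrow> k \<le> n \<Longrightarrow> 1 \<le> h!(k-2) \<and> h!(k-2) < k \<and> bkt b h (h!(k-2)) = h!(k-2)"
  unfolding valid_def by blast

lemma one_in_buckets: "1 \<le> n \<Longrightarrow> 1 \<in> buckets b h n"
  by (simp add: buckets_def)

lemma bkt_in_buckets: "valid b h n \<Longrightarrow> 1 \<le> m \<Longrightarrow> m \<le> n \<Longrightarrow> bkt b h m \<in> buckets b h n"
  using bkt_props[of b h n m] by (auto simp: buckets_def)

lemma finite_buckets[simp]: "finite (buckets b h n)"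
  by (simp add: buckets_def)

lemma sum_cap:
  assumes "valid b h n"
  shows "(\<Sum>u\<in>buckets b h n. cap b h n u) = n"
proof -
  have "(\<Sum>u\<in>buckets b h n. cap b h n u) = (\<Sum>u\<in>buckets b h n. \<Sum>x\<in>{x. x \<in> {1..n} \<and> bkt b h x = u}. (1::nat))"
    by (simp add: cap_def)
  also have "\<dots> = (\<Sum>x\<in>{1..n}. (1::nat))"
    by (rule sum.group) (use bkt_in_buckets[OF assms] in \<open>auto simp: buckets_def\<close>)
  finally show ?thesis by simp
qed

lemma sum_out:
  assumes "valid b h n" "1 \<le> n"
  shows "(\<Sum>u\<in>buckets b h n. outdeg b h n u) = card (buckets b h n) - 1"
proof -
  let ?M = "{m \<in> {2..n}. bkt b h m = m}"
  have "(\<Sum>u\<in>buckets b h n. outdeg b h n u) = (\<Sum>u\<in>buckets b h n. \<Sum>x\<in>{x. x \<in> ?M \<and> h!(x-2) = u}. (1::nat))"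
    by (auto simp: outdeg_def intro!: sum.cong arg_cong[where f=card])
  also have "\<dots> = (\<Sum>x\<in>?M. (1::nat))"
  proof (rule sum.group)
    show "(\<lambda>x. h!(x-2)) ` ?M \<subseteq> buckets b h n"
    proof
      fix y assume "y \<in> (\<lambda>x. h!(x-2)) ` ?M"
      then obtain x where x: "x \<in> ?M" "y = h!(x-2)" by blast
      then show "y \<in> buckets b h n" using valid_par[OF assms(1), of x] by (auto simp: buckets_def)
    qed
  qed auto
  also have "?M = buckets b h n - {1}" by (auto simp: buckets_def)
  finally show ?thesis using one_in_buckets[OF assms(2)] by (simp add: buckets_def)
qed

lemma sum_out_S:
  assumes "valid b h n" "1 \<le> j" "j \<le> n"
  defines "r \<equiv> bkt b h j"
  defines "S \<equiv> {u \<in> buckets b h n. in_subtree b h r u}"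
  shows "r \<in> S" "(\<Sum>u\<in>S. outdeg b h n u) = card S - 1"
proof -
  show rS: "r \<in> S" using bkt_in_buckets[OF assms(1-3)] by (simp add: S_def r_def in_subtree.self)
  let ?M = "{m \<in> {2..n}. bkt b h m = m \<and> h!(m-2) \<in> S}"
  have "(\<Sum>u\<in>S. outdeg b h n u) = (\<Sum>u\<in>S. \<Sum>x\<in>{x. x \<in> ?M \<and> h!(x-2) = u}. (1::nat))"
    by (auto simp: outdeg_def intro!: sum.cong arg_cong[where f=card])
  also have "\<dots> = (\<Sum>x\<in>?M. (1::nat))"
    by (rule sum.group) (auto simp: S_def buckets_def)
  also have "?M = S - {r}"
  proof
    show "?M \<subseteq> S - {r}"
    proof
      fix m assume m: "m \<in> ?M"
      have m2: "2 \<le> m" "m \<le> n" "bkt b h m = m" using m by auto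
      have p: "1 \<le> h!(m-2)" "h!(m-2) < m" using valid_par[OF assms(1) m2(1,2)] by auto
      have i1: "in_subtree b h r (h!(m-2))" using m by (simp add: S_def)
      have "h!(m-2) \<le> n" using p m2 by linarith
      then have "r \<le> h!(m-2)" using ins_le[OF assms(1) i1] by blast
      then have "m \<noteq> r" using p by linarith
      moreover have "in_subtree b h r m" by (rule in_subtree.step[OF m2(1) m2(3) i1])
      moreover have "m \<in> buckets b h n" using m2 by (simp add: buckets_def)
      ultimately show "m \<in> S - {r}" by (simp add: S_def)
    qed
  next
    show "S - {r} \<subseteq> ?M"
    proof
      fix u assume u: "u \<in> S - {r}"
      then have i: "in_subtree b h r u" and ub: "u \<in> buckets b h n" by (auto simp: S_def)
      have "2 \<le> u \<and> bkt b h u = u \<and> in_subtree b h r (h!(u-2))"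
        using i u by (cases rule: in_subtree.cases) auto
      moreover have "u \<le> n" using ub by (auto simp: buckets_def)
      ultimately show "u \<in> ?M" using valid_par[OF assms(1), of u]
        by (auto simp: S_def buckets_def)
    qed
  qed
  finally show "(\<Sum>u\<in>S. outdeg b h n u) = card S - 1" using rS
    by (simp add: S_def buckets_def)
qed

lemma before_j:
  assumes "valid b h n" "1 \<le> m" "m < j" "j \<le> n"
    and i: "in_subtree b h (bkt b h j) (bkt b h m)"
  shows "bkt b h m = bkt b h j"
proof (rule ccontr)
  let ?r = "bkt b h j" and ?x = "bkt b h m"
  assume ne: "?x \<noteq> ?r"
  have xm: "?x \<le> m" using bkt_props[OF assms(1) assms(2)] assms by auto
  then have "?x \<le> n" using assms by linarith
  then obtain c where c: "2 \<le> c" "c \<le> ?x" "bkt b h c = c" "h!(c-2) = ?r"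
    using ins_child[OF assms(1) i] ne by blast
  have cn: "c \<le> n" using c xm assms by linarith
  have rc: "?r < c" using valid_par[OF assms(1) c(1) cn] c(4) by simp
  have cj: "c < j" using c xm assms by linarith
  have "?r \<noteq> c" using rc by simp
  then have A: "\<not> card {m \<in> {1..<c}. bkt b h m = ?r} < b"
    using c bkt_eq[of b h c] by (auto split: if_splits)
  have j2: "2 \<le> j" using c cj by linarith
  have rj: "?r \<noteq> j" using rc cj by linarith
  have B: "card {m \<in> {1..<j}. bkt b h m = h!(j-2)} < b \<and> h!(j-2) = ?r"
    using rj j2 bkt_eq[of b h j] by (auto split: if_splits)
  have "card {m \<in> {1..<c}. bkt b h m = ?r} \<le> card {m \<in> {1..<j}. bkt b h m = ?r}"
    by (rule card_mono) (use cj in auto)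
  moreover have "card {m \<in> {1..<j}. bkt b h m = ?r} < b" using B[THEN conjunct1] unfolding B[THEN conjunct2] .
  ultimately show False using A by linarith
qed

lemma Kcap_eq:
  assumes "1 \<le> j"
  shows "Kcap b h j = card {m \<in> {1..j}. bkt b h m = bkt b h j}"
proof -
  have ag: "\<forall>k. 2 \<le> k \<and> k \<le> j \<longrightarrow> take (j-1) h ! (k-2) = h!(k-2)" by auto
  have "\<And>m. m \<le> j \<Longrightarrow> bkt b (take (j-1) h) m = bkt b h m" using bkt_cong[OF ag] by blast
  then show ?thesis unfolding Kcap_def cap_def Let_def
    by (intro arg_cong[where f=card]) auto
qed

lemma Ydesc_eq:
  assumes "valid b h n"
  shows "Ydesc b h n j = card {i \<in> {j..n}. desc b h j i}"
  using assms by (simp add: Ydesc_def valid_def)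

lemma sum_cap_S:
  assumes "valid b h n" "1 \<le> j" "j \<le> n"
  defines "r \<equiv> bkt b h j"
  defines "S \<equiv> {u \<in> buckets b h n. in_subtree b h r u}"
  shows "1 \<le> Kcap b h j" "(\<Sum>u\<in>S. cap b h n u) = (Kcap b h j - 1) + Ydesc b h n j"
proof -
  let ?A = "{m \<in> {1..<j}. bkt b h m = r}"
  let ?D = "{i \<in> {j..n}. desc b h j i}"
  have K: "Kcap b h j = card (insert j ?A)"
    unfolding Kcap_eq[OF assms(2)] r_def using assms(2)
    by (intro arg_cong[where f=card]) auto
  have K2: "Kcap b h j = card ?A + 1" unfolding K by simp
  then show "1 \<le> Kcap b h j" by simp
  have "(\<Sum>u\<in>S. cap b h n u) = (\<Sum>u\<in>S. \<Sum>x\<in>{x. x \<in> {m \<in> {1..n}. bkt b h m \<in> S} \<and> bkt b h x = u}. (1::nat))"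
    by (auto simp: cap_def intro!: sum.cong arg_cong[where f=card])
  also have "\<dots> = (\<Sum>x\<in>{m \<in> {1..n}. bkt b h m \<in> S}. (1::nat))"
    by (rule sum.group) (auto simp: S_def)
  also have "{m \<in> {1..n}. bkt b h m \<in> S} = ?A \<union> ?D"
  proof (intro equalityI subsetI)
    fix m assume m: "m \<in> {m \<in> {1..n}. bkt b h m \<in> S}"
    then have i: "in_subtree b h r (bkt b h m)" and m1: "1 \<le> m" "m \<le> n" by (auto simp: S_def)
    show "m \<in> ?A \<union> ?D"
    proof (cases "m < j")
      case True
      then have "bkt b h m = r" using before_j[OF assms(1) m1(1) True assms(3)] i by (simp add: r_def)
      then show ?thesis using True m1 by simp
    next
      case False
      then show ?thesis using i m1 by (simp add: desc_def r_def)
    qed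
  next
    fix m assume m: "m \<in> ?A \<union> ?D"
    show "m \<in> {m \<in> {1..n}. bkt b h m \<in> S}"
    proof (cases "m < j")
      case True
      then have m1: "1 \<le> m" "bkt b h m = r" using m by (auto simp: desc_def)
      have "r \<in> buckets b h n" using bkt_in_buckets[OF assms(1-3)] by (simp add: r_def)
      then show ?thesis using m1 True assms(3) by (simp add: S_def in_subtree.self)
    next
      case False
      then have m1: "j \<le> m" "m \<le> n" "in_subtree b h r (bkt b h m)" using m by (auto simp: desc_def r_def)
      have "bkt b h m \<in> buckets b h n" using bkt_in_buckets[OF assms(1)] m1 assms(2) by simp
      then show ?thesis using m1 assms(2) by (simp add: S_def)
    qed
  qed
  also have "(\<Sum>x\<in>?A \<union> ?D. (1::nat)) = card ?A + card ?D"
    by (subst card_Un_disjoint[symmetric]) (auto simp: desc_def)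
  finally show "(\<Sum>u\<in>S. cap b h n u) = (Kcap b h j - 1) + Ydesc b h n j"
    using K2 Ydesc_eq[OF assms(1)] by simp
qed




lemma split_top: "a \<le> Suc n \<Longrightarrow> {m \<in> {a..Suc n}. P m} = {m \<in> {a..n}. P m} \<union> (if P (Suc n) then {Suc n} else {})"
  by (auto simp: le_Suc_eq)

lemma card_split_top: "a \<le> Suc n \<Longrightarrow> card {m \<in> {a..Suc n}. P m} = card {m \<in> {a..n}. P m} + (if P (Suc n) then 1 else 0)"
  by (subst split_top) (auto simp: card_insert_if)

context
  fixes b h n v
  assumes V: "valid b h n" and n1: "1 \<le> n" and vB: "v \<in> buckets b h n"
begin

lemma ext_agree: "\<forall>k. 2 \<le> k \<and> k \<le> n \<longrightarrow> (h @ [v])!(k-2) = h!(k-2)"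
  using V by (auto simp: valid_def nth_append)

lemma ext_bkt_le: "m \<le> n \<Longrightarrow> bkt b (h @ [v]) m = bkt b h m"
  using bkt_cong[OF ext_agree] by metis

lemma ext_last: "(h @ [v]) ! (Suc n - 2) = v"
  using V n1 by (auto simp: valid_def nth_append)

lemma ext_bkt_new: "bkt b (h @ [v]) (Suc n) = (if cap b h n v < b then v else Suc n)"
proof -
  have "{m \<in> {1..<Suc n}. bkt b (h @ [v]) m = v} = {m \<in> {1..n}. bkt b h m = v}"
    using ext_bkt_le by auto
  then show ?thesis using n1 ext_last by (subst bkt_eq) (simp add: cap_def)
qed

lemma vB': "1 \<le> v" "v \<le> n" "bkt b h v = v" using vB by (auto simp: buckets_def)

lemma ext_valid: "valid b (h @ [v]) (Suc n)"
  unfolding valid_def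
proof (rule conjI[OF _ allI[OF impI]])
  show "length (h @ [v]) = Suc n - 1" using V n1 by (simp add: valid_def)
next
  fix k assume k: "2 \<le> k \<and> k \<le> Suc n"
  show "1 \<le> (h @ [v]) ! (k - 2) \<and> (h @ [v]) ! (k - 2) < k \<and>
        bkt b (h @ [v]) ((h @ [v]) ! (k - 2)) = (h @ [v]) ! (k - 2)"
  proof (cases "k = Suc n")
    case True
    then show ?thesis using ext_last vB' ext_bkt_le by simp
  next
    case False
    then have kn: "k \<le> n" using k by simp
    have e: "(h @ [v]) ! (k - 2) = h!(k-2)" using ext_agree k kn by blast
    have p: "1 \<le> h!(k-2) \<and> h!(k-2) < k \<and> bkt b h (h!(k-2)) = h!(k-2)" using valid_par[OF V] k kn by blast
    then have "bkt b (h @ [v]) (h!(k-2)) = h!(k-2)" using ext_bkt_le[of "h!(k-2)"] kn by simp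
    then show ?thesis using e p by simp
  qed
qed

lemma ext_cap: "cap b (h @ [v]) (Suc n) u = cap b h n u + (if bkt b (h @ [v]) (Suc n) = u then 1 else 0)"
proof -
  have "{m \<in> {1..n}. bkt b (h @ [v]) m = u} = {m \<in> {1..n}. bkt b h m = u}"
    using ext_bkt_le by (intro Collect_cong) auto
  moreover have "card {m \<in> {1..Suc n}. bkt b (h @ [v]) m = u} = card {m \<in> {1..n}. bkt b (h @ [v]) m = u} + (if bkt b (h @ [v]) (Suc n) = u then 1 else 0)"
    by (rule card_split_top) simp
  ultimately show ?thesis unfolding cap_def by simp
qed

lemma ext_outdeg: "outdeg b (h @ [v]) (Suc n) u =
   outdeg b h n u + (if bkt b (h @ [v]) (Suc n) = Suc n \<and> v = u then 1 else 0)"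
proof -
  have "{m \<in> {2..n}. bkt b (h @ [v]) m = m \<and> (h @ [v]) ! (m - 2) = u} =
        {m \<in> {2..n}. bkt b h m = m \<and> h ! (m - 2) = u}"
  proof (intro Collect_cong)
    fix m
    show "(m \<in> {2..n} \<and> bkt b (h @ [v]) m = m \<and> (h @ [v]) ! (m - 2) = u) =
          (m \<in> {2..n} \<and> bkt b h m = m \<and> h ! (m - 2) = u)"
    proof (cases "m \<in> {2..n}")
      case True
      then have "(h @ [v]) ! (m - 2) = h ! (m-2)" "bkt b (h @ [v]) m = bkt b h m"
        using ext_agree ext_bkt_le by auto
      then show ?thesis by simp
    qed blast
  qed
  moreover have "card {m \<in> {2..Suc n}. bkt b (h @ [v]) m = m \<and> (h @ [v]) ! (m - 2) = u} = card {m \<in> {2..n}. bkt b (h @ [v]) m = m \<and> (h @ [v]) ! (m - 2) = u} + (if bkt b (h @ [v]) (Suc n) = Suc n \<and> (h @ [v]) ! (Suc n - 2) = u then 1 else 0)"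
    by (rule card_split_top) (use n1 in simp)
  ultimately show ?thesis unfolding outdeg_def ext_last by simp
qed

lemma ext_buckets: "buckets b (h @ [v]) (Suc n) =
   buckets b h n \<union> (if bkt b (h @ [v]) (Suc n) = Suc n then {Suc n} else {})"
proof -
  have "{m \<in> {1..n}. bkt b (h @ [v]) m = m} = {m \<in> {1..n}. bkt b h m = m}"
    using ext_bkt_le by (intro Collect_cong) auto
  moreover have "{m \<in> {1..Suc n}. bkt b (h @ [v]) m = m} = {m \<in> {1..n}. bkt b (h @ [v]) m = m} \<union> (if bkt b (h @ [v]) (Suc n) = Suc n then {Suc n} else {})"
    by (rule split_top) simp
  ultimately show ?thesis unfolding buckets_def by simp
qed

lemma ext_ins: "x \<le> n \<Longrightarrow> in_subtree b (h @ [v]) r x \<longleftrightarrow> in_subtree b h r x"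
proof -
  assume x: "x \<le> n"
  have par: "\<forall>k. 2 \<le> k \<and> k \<le> n \<longrightarrow> h!(k-2) < k" using valid_par[OF V] by blast
  have ag2: "\<forall>k. 2 \<le> k \<and> k \<le> n \<longrightarrow> h!(k-2) = (h @ [v])!(k-2)" using ext_agree by simp
  have par2: "\<forall>k. 2 \<le> k \<and> k \<le> n \<longrightarrow> (h @ [v])!(k-2) < k" using par ext_agree by simp
  show ?thesis
  proof
    assume "in_subtree b (h @ [v]) r x"
    then show "in_subtree b h r x" using ins_cong[OF ext_agree par2, of b r x] x by simp
  next
    assume "in_subtree b h r x"
    then show "in_subtree b (h @ [v]) r x" using ins_cong[OF ag2 par, of b r x] x by simp
  qed
qed

lemma ext_desc:
  assumes jn: "j \<le> n"
  shows "desc b (h @ [v]) j (Suc n) \<longleftrightarrow> in_subtree b h (bkt b h j) v"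
proof -
  have bj: "bkt b (h @ [v]) j = bkt b h j" using ext_bkt_le jn by blast
  have rj: "bkt b h j \<le> n"
  proof (cases "j = 0")
    case True then show ?thesis using n1 by simp
  next
    case False then show ?thesis using bkt_props[OF V, of j] jn by simp
  qed
  have eq: "in_subtree b (h @ [v]) (bkt b h j) v \<longleftrightarrow> in_subtree b h (bkt b h j) v"
    by (rule ext_ins[OF vB'(2)])
  have d: "desc b (h @ [v]) j (Suc n) \<longleftrightarrow> in_subtree b (h @ [v]) (bkt b h j) (bkt b (h @ [v]) (Suc n))"
    unfolding desc_def bj using jn by simp
  show ?thesis
  proof (cases "cap b h n v < b")
    case True
    then have "bkt b (h @ [v]) (Suc n) = v" using ext_bkt_new by simp
    then show ?thesis using d eq by simp
  next
    case False
    then have nw: "bkt b (h @ [v]) (Suc n) = Suc n" using ext_bkt_new by simp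
    have "in_subtree b (h @ [v]) (bkt b h j) (Suc n) \<longleftrightarrow> in_subtree b (h @ [v]) (bkt b h j) v"
    proof
      assume "in_subtree b (h @ [v]) (bkt b h j) (Suc n)"
      then show "in_subtree b (h @ [v]) (bkt b h j) v"
      proof (cases rule: in_subtree.cases)
        case self then show ?thesis using rj by simp
      next
        case step then show ?thesis using ext_last by simp
      qed
    next
      assume a: "in_subtree b (h @ [v]) (bkt b h j) v"
      have a': "in_subtree b (h @ [v]) (bkt b h j) ((h @ [v]) ! (Suc n - 2))" using a ext_last by simp
      have "2 \<le> Suc n" using n1 by simp
      then show "in_subtree b (h @ [v]) (bkt b h j) (Suc n)"
        by (rule in_subtree.step[OF _ nw a'])
    qed
    then show ?thesis using d eq nw by simp
  qed
qed

lemma ext_Kcap: assumes "1 \<le> j" "j \<le> n" shows "Kcap b (h @ [v]) j = Kcap b h j"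
proof -
  have "bkt b (h @ [v]) j = bkt b h j" using ext_bkt_le assms by blast
  moreover have "{m \<in> {1..j}. bkt b (h @ [v]) m = bkt b h j} = {m \<in> {1..j}. bkt b h m = bkt b h j}"
  proof (intro Collect_cong)
    fix m show "(m \<in> {1..j} \<and> bkt b (h @ [v]) m = bkt b h j) = (m \<in> {1..j} \<and> bkt b h m = bkt b h j)"
      using ext_bkt_le[of m] assms by (cases "m \<le> j") auto
  qed
  ultimately show ?thesis unfolding Kcap_eq[OF assms(1)] by simp
qed

lemma ext_Ydesc: "Ydesc b (h @ [v]) n j = Ydesc b h n j"
proof -
  have L: "length h = n - 1" using V by (simp add: valid_def)
  then show ?thesis unfolding Ydesc_def by simp
qed

end




definition wl :: "family \<Rightarrow> nat \<Rightarrow> nat list \<Rightarrow> nat \<Rightarrow> (nat \<times> real) list" where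
  "wl fam b h n = map (\<lambda>v. (v, weight fam b h n v)) (filter (\<lambda>v. bkt b h v = v) [1..<Suc n])"

lemma choose_eq: "choose_bucket fam b h n = pmf_of_list (wl fam b h n)"
  by (simp add: choose_bucket_def wl_def)

lemma wl_filter_sum:
  "sum_list (map snd (filter (\<lambda>x. P (fst x)) (wl fam b h n))) = (\<Sum>u\<in>{u \<in> buckets b h n. P u}. weight fam b h n u)"
proof -
  have "sum_list (map snd (filter (\<lambda>x. P (fst x)) (wl fam b h n))) =
        sum_list (map (weight fam b h n) (filter P (filter (\<lambda>v. bkt b h v = v) [1..<Suc n])))"
    by (simp add: wl_def filter_map o_def)
  also have "\<dots> = sum (weight fam b h n) (set (filter P (filter (\<lambda>v. bkt b h v = v) [1..<Suc n])))"
    by (rule sum_list_distinct_conv_sum_set) simp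
  also have "set (filter P (filter (\<lambda>v. bkt b h v = v) [1..<Suc n])) = {u \<in> buckets b h n. P u}"
    by (auto simp: buckets_def)
  finally show ?thesis .
qed

lemma wl_sum: "sum_list (map snd (wl fam b h n)) = (\<Sum>u\<in>buckets b h n. weight fam b h n u)"
  using wl_filter_sum[of "\<lambda>_. True" fam b h n] by simp

definition tinv :: "family \<Rightarrow> nat \<Rightarrow> nat list \<Rightarrow> nat \<Rightarrow> bool" where
  "tinv fam b h n = (valid b h n \<and> (\<forall>u\<in>buckets b h n. 0 \<le> weight fam b h n u))"

lemma weight_sum_gen:
  "(\<Sum>u\<in>X. weight fam b h n u) = (case fam of
      BRT \<Rightarrow> real (\<Sum>u\<in>X. cap b h n u) / real n
    | Dary d \<Rightarrow> ((real d - 1) * real (\<Sum>u\<in>X. cap b h n u) + real (card X) - real (\<Sum>u\<in>X. outdeg b h n u))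
                / ((real d - 1) * real n + 1)
    | PORT \<alpha> \<Rightarrow> (real (\<Sum>u\<in>X. outdeg b h n u) + (\<alpha> + 1) * real (\<Sum>u\<in>X. cap b h n u) - real (card X))
                / ((\<alpha> + 1) * real n - 1))"
  by (cases fam) (simp_all add: weight_def sum_divide_distrib[symmetric] sum.distrib sum_subtractf
        sum_distrib_left of_nat_sum)

lemma card_ge1: "finite X \<Longrightarrow> x \<in> X \<Longrightarrow> 1 \<le> card X"
  using card_0_eq[of X] by fastforce

lemma total_weight:
  assumes F: "valid_family fam" and V: "valid b h n" and n1: "1 \<le> n"
  shows "(\<Sum>u\<in>buckets b h n. weight fam b h n u) = 1"
proof -
  have c1: "1 \<le> card (buckets b h n)" using card_ge1[OF finite_buckets one_in_buckets[OF n1]] .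
  have so: "real (\<Sum>u\<in>buckets b h n. outdeg b h n u) = real (card (buckets b h n)) - 1"
    using sum_out[OF V n1] c1 by (simp add: of_nat_diff)
  show ?thesis
  proof (cases fam)
    case BRT then show ?thesis using n1 by (simp add: weight_sum_gen sum_cap[OF V])
  next
    case (Dary d)
    then have "d \<ge> 2" using F by (simp add: valid_family_def)
    then have "0 \<le> (real d - 1) * real n" by simp
    then have "(real d - 1) * real n + 1 > 0" by linarith
    then show ?thesis unfolding weight_sum_gen so sum_cap[OF V] using Dary by simp
  next
    case (PORT a)
    then have "a > 0" using F by (simp add: valid_family_def)
    then have "(a + 1) * real n - 1 > 0" using n1
      by (smt (verit, ccfv_SIG) mult_le_cancel_left1 of_nat_le_iff of_nat_1)
    then show ?thesis unfolding weight_sum_gen so sum_cap[OF V] using PORT by simp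
  qed
qed

lemma subtree_weight:
  assumes F: "valid_family fam" and V: "valid b h n" and j: "1 \<le> j" "j \<le> n"
  shows "(\<Sum>u\<in>{u \<in> buckets b h n. in_subtree b h (bkt b h j) u}. weight fam b h n u)
         = cond_formula fam (Kcap b h j) n (Ydesc b h n j)"
proof -
  let ?S = "{u \<in> buckets b h n. in_subtree b h (bkt b h j) u}"
  have fS: "finite ?S" by simp
  have c1: "1 \<le> card ?S" using card_ge1[OF fS sum_out_S(1)[OF V j]] .
  have so: "real (\<Sum>u\<in>?S. outdeg b h n u) = real (card ?S) - 1"
    using sum_out_S(2)[OF V j] c1 by (simp add: of_nat_diff)
  have K1: "1 \<le> Kcap b h j" using sum_cap_S(1)[OF V j] .
  have sc: "real (\<Sum>u\<in>?S. cap b h n u) = real (Kcap b h j) - 1 + real (Ydesc b h n j)"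
    using sum_cap_S(2)[OF V j] K1 by (simp add: of_nat_diff)
  show ?thesis
    unfolding weight_sum_gen cond_formula_def so sc
    by (cases fam) (simp_all add: algebra_simps)
qed

lemma cap_pos: "u \<in> buckets b h n \<Longrightarrow> 1 \<le> cap b h n u"
  unfolding cap_def by (rule card_ge1[of _ u]) (auto simp: buckets_def)

lemma wl_wf:
  assumes F: "valid_family fam" and I: "tinv fam b h n" and n1: "1 \<le> n"
  shows "pmf_of_list_wf (wl fam b h n)"
proof (rule pmf_of_list_wfI)
  fix x assume "x \<in> set (map snd (wl fam b h n))"
  moreover have "set (filter (\<lambda>v. bkt b h v = v) [1..<Suc n]) = buckets b h n"
    by (auto simp: buckets_def)
  ultimately obtain u where "u \<in> buckets b h n" "x = weight fam b h n u"
    unfolding wl_def by auto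
  then show "0 \<le> x" using I by (simp add: tinv_def)
next
  show "sum_list (map snd (wl fam b h n)) = 1"
    using total_weight[OF F _ n1] I by (simp add: wl_sum tinv_def)
qed

lemma supp_choose:
  assumes W: "pmf_of_list_wf (wl fam b h n)" and I: "tinv fam b h n"
    and v: "v \<in> set_pmf (pmf_of_list (wl fam b h n))"
  shows "v \<in> buckets b h n \<and> 0 < weight fam b h n v"
proof -
  have p0: "pmf (pmf_of_list (wl fam b h n)) v \<noteq> 0" using v by (simp add: set_pmf_iff)
  have "pmf (pmf_of_list (wl fam b h n)) v = (\<Sum>u\<in>{u \<in> buckets b h n. u = v}. weight fam b h n u)"
    unfolding pmf_pmf_of_list[OF W] wl_filter_sum[of "\<lambda>u. u = v" fam b h n, symmetric] by simp
  also have "{u \<in> buckets b h n. u = v} = (if v \<in> buckets b h n then {v} else {})" by auto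
  finally have pv: "pmf (pmf_of_list (wl fam b h n)) v = (if v \<in> buckets b h n then weight fam b h n v else 0)"
    by simp
  have vB: "v \<in> buckets b h n" using p0 pv by (cases "v \<in> buckets b h n") auto
  then have "weight fam b h n v \<noteq> 0" using p0 pv by simp
  moreover have "0 \<le> weight fam b h n v" using I vB by (simp add: tinv_def)
  ultimately show ?thesis using vB by simp
qed

lemma prob_choose:
  assumes W: "pmf_of_list_wf (wl fam b h n)"
  shows "measure_pmf.prob (pmf_of_list (wl fam b h n)) A = (\<Sum>u\<in>{u \<in> buckets b h n. u \<in> A}. weight fam b h n u)"
  using measure_pmf_of_list[OF W, of A] wl_filter_sum[of "\<lambda>u. u \<in> A" fam b h n] by simp

lemma div_pos_iff: "(D::real) > 0 \<Longrightarrow> (0 \<le> x / D) = (0 \<le> x)" "(D::real) > 0 \<Longrightarrow> (0 < x / D) = (0 < x)"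
  by (simp_all add: zero_le_divide_iff zero_less_divide_iff)

lemma nat_diff_iff: "(0 \<le> real (X::nat) - real Y) = (Y \<le> X)" "(0 < real (X::nat) - real Y) = (Y < X)"
  by simp_all

lemma dary_w:
  assumes "d \<ge> 2"
  shows "0 \<le> weight (Dary d) b h n u \<longleftrightarrow> outdeg b h n u \<le> (d-1) * cap b h n u + 1"
    and "0 < weight (Dary d) b h n u \<longleftrightarrow> outdeg b h n u < (d-1) * cap b h n u + 1"
proof -
  have e: "real d - 1 = real (d - 1)" using assms by (simp add: of_nat_diff)
  have "0 \<le> (real d - 1) * real n" using assms by simp
  then have D: "(real d - 1) * real n + 1 > 0" by linarith
  have N: "(real d - 1) * real (cap b h n u) + 1 - real (outdeg b h n u)
          = real ((d-1) * cap b h n u + 1) - real (outdeg b h n u)" unfolding e by simp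
  have w: "weight (Dary d) b h n u = (real ((d-1) * cap b h n u + 1) - real (outdeg b h n u)) / ((real d - 1) * real n + 1)"
    unfolding weight_def family.case N ..
  show "0 \<le> weight (Dary d) b h n u \<longleftrightarrow> outdeg b h n u \<le> (d-1) * cap b h n u + 1"
    unfolding w div_pos_iff(1)[OF D] nat_diff_iff ..
  show "0 < weight (Dary d) b h n u \<longleftrightarrow> outdeg b h n u < (d-1) * cap b h n u + 1"
    unfolding w div_pos_iff(2)[OF D] nat_diff_iff ..
qed

lemma weight_nonneg:
  assumes F: "valid_family fam" and n1: "1 \<le> n" and u: "u \<in> buckets b h n"
    and D: "\<And>d. fam = Dary d \<Longrightarrow> outdeg b h n u \<le> (d-1) * cap b h n u + 1"
  shows "0 \<le> weight fam b h n u"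
proof (cases fam)
  case BRT then show ?thesis by (simp add: weight_def)
next
  case (Dary d)
  then show ?thesis using dary_w(1)[of d b h n u] D F by (simp add: valid_family_def)
next
  case (PORT a)
  then have a: "a > 0" using F by (simp add: valid_family_def)
  have c: "1 \<le> real (cap b h n u)" using cap_pos[OF u] by simp
  have "(a + 1) * 1 \<le> (a + 1) * real (cap b h n u)" using a c by (intro mult_left_mono) auto
  then have "a + 1 \<le> (a + 1) * real (cap b h n u)" by simp
  moreover have "0 \<le> real (outdeg b h n u)" by simp
  ultimately have num: "0 \<le> real (outdeg b h n u) + (a + 1) * real (cap b h n u) - 1" using a by linarith
  have "(a + 1) * 1 \<le> (a + 1) * real n" using a n1 by (intro mult_left_mono) auto
  then have "a + 1 \<le> (a + 1) * real n" by simp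
  then have den: "0 \<le> (a + 1) * real n - 1" using a by linarith
  show ?thesis using PORT num den by (simp add: weight_def)
qed




lemma measure_bind_pmf_int:
  "measure_pmf.prob (bind_pmf M f) X = (\<integral>x. measure_pmf.prob (f x) X \<partial>measure_pmf M)"
  unfolding measure_pmf_bind
  apply (rule measure_pmf.measure_bind[where N="count_space UNIV"])
   apply (auto simp: space_subprob_algebra measure_pmf.subprob_space_axioms)
  done

lemma outdeg_top0:
  assumes V: "valid b h n"
  shows "outdeg b h n (Suc n) = 0"
proof -
  have "{m \<in> {2..n}. bkt b h m = m \<and> h ! (m - 2) = Suc n} = {}"
  proof (rule ccontr)
    assume "{m \<in> {2..n}. bkt b h m = m \<and> h ! (m - 2) = Suc n} \<noteq> {}"
    then obtain m where m: "2 \<le> m" "m \<le> n" "h ! (m - 2) = Suc n" by auto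
    then show False using valid_par[OF V m(1,2)] by simp
  qed
  then show ?thesis by (simp add: outdeg_def)
qed

lemma inv_step:
  assumes F: "valid_family fam" and I: "tinv fam b h n" and n1: "1 \<le> n"
    and vB: "v \<in> buckets b h n" and wp: "0 < weight fam b h n v"
  shows "tinv fam b (h @ [v]) (Suc n)"
proof -
  have V: "valid b h n" using I by (simp add: tinv_def)
  have V': "valid b (h @ [v]) (Suc n)" using ext_valid[OF V n1 vB] .
  have vn: "v \<le> n" using vB by (simp add: buckets_def)
  have "0 \<le> weight fam b (h @ [v]) (Suc n) u" if u: "u \<in> buckets b (h @ [v]) (Suc n)" for u
  proof (rule weight_nonneg[OF F _ u])
    show "1 \<le> Suc n" by simp
    fix d assume fd: "fam = Dary d"
    then have d2: "d \<ge> 2" using F by (simp add: valid_family_def)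
    show "outdeg b (h @ [v]) (Suc n) u \<le> (d-1) * cap b (h @ [v]) (Suc n) u + 1"
    proof (cases "u \<in> buckets b h n")
      case True
      have old: "outdeg b h n u \<le> (d-1) * cap b h n u + 1"
        using I True dary_w(1)[OF d2, of b h n u] fd by (simp add: tinv_def)
      have capge: "cap b h n u \<le> cap b (h @ [v]) (Suc n) u" using ext_cap[OF V n1 vB, of u] by simp
      then have capge': "(d-1) * cap b h n u \<le> (d-1) * cap b (h @ [v]) (Suc n) u" by (rule mult_le_mono2)
      show ?thesis
      proof (cases "bkt b (h @ [v]) (Suc n) = Suc n \<and> v = u")
        case True2: True
        have e1: "(if bkt b (h @ [v]) (Suc n) = Suc n \<and> v = u then 1 else 0) = (1::nat)"
          using True2 by (rule if_P)
        have o: "outdeg b (h @ [v]) (Suc n) u = outdeg b h n u + 1"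
          by (simp only: ext_outdeg[OF V n1 vB, of u] e1)
        have "outdeg b h n v < (d-1) * cap b h n v + 1" using wp fd dary_w(2)[OF d2, of b h n v] by simp
        moreover have "v = u" using True2 by simp
        ultimately have lt: "outdeg b h n u < (d-1) * cap b h n u + 1" by simp
        show ?thesis using o lt capge' by linarith
      next
        case False
        then have o: "outdeg b (h @ [v]) (Suc n) u = outdeg b h n u" using ext_outdeg[OF V n1 vB, of u] by simp
        then show ?thesis using old capge' by linarith
      qed
    next
      case False
      then have "u = Suc n" using u ext_buckets[OF V n1 vB] by (auto split: if_splits)
      then have "outdeg b (h @ [v]) (Suc n) u = 0"
        using ext_outdeg[OF V n1 vB, of u] outdeg_top0[OF V] vn by simp
      then show ?thesis by simp
    qed
  qed
  then show ?thesis using V' by (simp add: tinv_def)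
qed

lemma supp_inv:
  assumes F: "valid_family fam"
  shows "1 \<le> n \<Longrightarrow> h \<in> set_pmf (tree_pmf fam b n) \<Longrightarrow> tinv fam b h n"
proof (induction n arbitrary: h)
  case 0 then show ?case by simp
next
  case (Suc n)
  show ?case
  proof (cases "n = 0")
    case True
    then have h: "h = []" using Suc.prems by simp
    have V: "valid b [] 1" by (simp add: valid_def)
    have "0 \<le> weight fam b [] 1 u" if u: "u \<in> buckets b [] 1" for u
      by (rule weight_nonneg[OF F _ u]) (simp_all add: outdeg_def)
    then show ?thesis using V h True by (simp add: tinv_def)
  next
    case False
    then obtain h0 v where h0: "h0 \<in> set_pmf (tree_pmf fam b n)"
        and v: "v \<in> set_pmf (choose_bucket fam b h0 n)" and hv: "h = h0 @ [v]"
      using Suc.prems by auto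
    have n1: "1 \<le> n" using False by simp
    have I: "tinv fam b h0 n" using Suc.IH[OF n1 h0] .
    have W: "pmf_of_list_wf (wl fam b h0 n)" by (rule wl_wf[OF F I n1])
    have "v \<in> buckets b h0 n \<and> 0 < weight fam b h0 n v"
      using supp_choose[OF W I] v by (simp add: choose_eq)
    then show ?thesis using inv_step[OF F I n1] hv by simp
  qed
qed




theorem mainTheorem6:
  fixes fam :: family and b j l :: nat
  assumes "b \<ge> 1" and "valid_family fam" and "j \<ge> 1" and "l \<in> {1..b}"
    and "measure_pmf.prob (tree_pmf fam b j) {h. Kcap b h j = l} > 0"
  shows "(\<forall>n\<ge>j. \<forall>h\<in>set_pmf (tree_pmf fam b n). Kcap b h j = l \<longrightarrow> Aind b h j j = 1)
       \<and> (\<forall>n\<ge>j. \<forall>h\<in>set_pmf (tree_pmf fam b n). Kcap b h j = l \<longrightarrow>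
             Ydesc b h n j = (\<Sum>i=j..n. Aind b h j i))
       \<and> (\<forall>i\<ge>j. \<forall>y::nat.
             measure_pmf.prob (tree_pmf fam b (Suc i)) {h. Kcap b h j = l \<and> Ydesc b h i j = y} > 0 \<longrightarrow>
             measure_pmf.prob (tree_pmf fam b (Suc i))
                 {h. Kcap b h j = l \<and> Ydesc b h i j = y \<and> Aind b h j (Suc i) = 1}
             / measure_pmf.prob (tree_pmf fam b (Suc i)) {h. Kcap b h j = l \<and> Ydesc b h i j = y}
             = cond_formula fam l i y)"
proof (intro conjI allI impI ballI)
  fix n h assume "j \<le> n" "h \<in> set_pmf (tree_pmf fam b n)" "Kcap b h j = l"
  show "Aind b h j j = 1" by (simp add: Aind_def desc_def in_subtree.self)
next
  fix n h assume n: "j \<le> n" and h: "h \<in> set_pmf (tree_pmf fam b n)" and "Kcap b h j = l"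
  have I: "tinv fam b h n" using supp_inv[OF assms(2)] n assms(3) h by simp
  then have V: "valid b h n" by (simp add: tinv_def)
  have "(\<Sum>i=j..n. Aind b h j i) = (\<Sum>i\<in>{j..n}. if desc b h j i then 1 else 0)"
    by (simp add: Aind_def)
  also have "\<dots> = (\<Sum>i\<in>{i \<in> {j..n}. desc b h j i}. 1)"
    by (rule sum.inter_filter[symmetric]) simp
  also have "\<dots> = Ydesc b h n j" using Ydesc_eq[OF V] by simp
  finally show "Ydesc b h n j = (\<Sum>i=j..n. Aind b h j i)" by simp
next
  fix i y assume ij: "j \<le> i"
    and pos: "measure_pmf.prob (tree_pmf fam b (Suc i)) {h. Kcap b h j = l \<and> Ydesc b h i j = y} > 0"
  let ?T = "tree_pmf fam b i"
  let ?E = "{h. Kcap b h j = l \<and> Ydesc b h i j = y \<and> Aind b h j (Suc i) = 1}"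
  let ?D = "{h. Kcap b h j = l \<and> Ydesc b h i j = y}"
  let ?f = "\<lambda>h. map_pmf (\<lambda>v. h @ [v]) (choose_bucket fam b h i)"
  let ?c = "cond_formula fam l i y"
  have i1: "1 \<le> i" using ij assms(3) by simp
  have T: "tree_pmf fam b (Suc i) = bind_pmf ?T ?f" using i1 by simp
  have key: "measure_pmf.prob (?f h) ?E = ?c * measure_pmf.prob (?f h) ?D" if h: "h \<in> set_pmf ?T" for h
  proof -
    have I: "tinv fam b h i" using supp_inv[OF assms(2) i1 h] .
    have V: "valid b h i" using I by (simp add: tinv_def)
    have W: "pmf_of_list_wf (wl fam b h i)" by (rule wl_wf[OF assms(2) I i1])
    let ?C = "pmf_of_list (wl fam b h i)"
    have sub: "set_pmf ?C \<subseteq> buckets b h i" using supp_choose[OF W I] by blast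
    let ?Q = "Kcap b h j = l \<and> Ydesc b h i j = y"
    let ?S = "{u. in_subtree b h (bkt b h j) u}"
    have memD: "h @ [v] \<in> ?D \<longleftrightarrow> ?Q" if v: "v \<in> buckets b h i" for v
      using ext_Kcap[OF V i1 v assms(3) ij] ext_Ydesc[OF V i1 v] by simp
    have memE: "h @ [v] \<in> ?E \<longleftrightarrow> ?Q \<and> v \<in> ?S" if v: "v \<in> buckets b h i" for v
      using ext_Kcap[OF V i1 v assms(3) ij] ext_Ydesc[OF V i1 v] ext_desc[OF V i1 v ij]
      by (simp add: Aind_def)
    have pD: "measure_pmf.prob (?f h) ?D = (if ?Q then 1 else 0)"
    proof -
      have "measure_pmf.prob (?f h) ?D = measure_pmf.prob ?C ((\<lambda>v. h @ [v]) -` ?D)"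
        by (simp add: choose_eq)
      also have "\<dots> = measure_pmf.prob ?C (((\<lambda>v. h @ [v]) -` ?D) \<inter> set_pmf ?C)"
        by (rule measure_Int_set_pmf[symmetric])
      also have "((\<lambda>v. h @ [v]) -` ?D) \<inter> set_pmf ?C = (if ?Q then UNIV else {}) \<inter> set_pmf ?C"
        using memD sub by auto
      also have "measure_pmf.prob ?C \<dots> = measure_pmf.prob ?C (if ?Q then UNIV else {})"
        by (rule measure_Int_set_pmf)
      finally show ?thesis by simp
    qed
    have pE: "measure_pmf.prob (?f h) ?E = (if ?Q then ?c else 0)"
    proof -
      have "measure_pmf.prob (?f h) ?E = measure_pmf.prob ?C ((\<lambda>v. h @ [v]) -` ?E)"
        by (simp add: choose_eq)
      also have "\<dots> = measure_pmf.prob ?C (((\<lambda>v. h @ [v]) -` ?E) \<inter> set_pmf ?C)"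
        by (rule measure_Int_set_pmf[symmetric])
      also have "((\<lambda>v. h @ [v]) -` ?E) \<inter> set_pmf ?C = (if ?Q then ?S else {}) \<inter> set_pmf ?C"
        using memE sub by auto
      also have "measure_pmf.prob ?C \<dots> = measure_pmf.prob ?C (if ?Q then ?S else {})"
        by (rule measure_Int_set_pmf)
      also have "\<dots> = (if ?Q then ?c else 0)"
      proof (cases ?Q)
        case True
        have "measure_pmf.prob ?C ?S = (\<Sum>u\<in>{u \<in> buckets b h i. in_subtree b h (bkt b h j) u}. weight fam b h i u)"
          using prob_choose[OF W, of ?S] by simp
        also have "\<dots> = cond_formula fam (Kcap b h j) i (Ydesc b h i j)"
          by (rule subtree_weight[OF assms(2) V assms(3) ij])
        finally show ?thesis using True by simp
      next
        case False
        show ?thesis by (simp only: if_not_P[OF False]) simp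
      qed
      finally show ?thesis .
    qed
    show ?thesis using pD pE by simp
  qed
  have num: "measure_pmf.prob (tree_pmf fam b (Suc i)) ?E = ?c * measure_pmf.prob (tree_pmf fam b (Suc i)) ?D"
  proof -
    have "measure_pmf.prob (tree_pmf fam b (Suc i)) ?E = (\<integral>h. measure_pmf.prob (?f h) ?E \<partial>measure_pmf ?T)"
      unfolding T by (rule measure_bind_pmf_int)
    also have "\<dots> = (\<integral>h. ?c * measure_pmf.prob (?f h) ?D \<partial>measure_pmf ?T)"
    proof (rule integral_cong_AE)
      show "AE h in measure_pmf ?T. measure_pmf.prob (?f h) ?E = ?c * measure_pmf.prob (?f h) ?D"
        by (rule AE_pmfI) (rule key)
    qed auto
    also have "\<dots> = ?c * (\<integral>h. measure_pmf.prob (?f h) ?D \<partial>measure_pmf ?T)"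
      by simp
    also have "(\<integral>h. measure_pmf.prob (?f h) ?D \<partial>measure_pmf ?T) = measure_pmf.prob (tree_pmf fam b (Suc i)) ?D"
      unfolding T by (rule measure_bind_pmf_int[symmetric])
    finally show ?thesis .
  qed
  show "measure_pmf.prob (tree_pmf fam b (Suc i)) ?E / measure_pmf.prob (tree_pmf fam b (Suc i)) ?D = ?c"
    using num pos by simp
qed


end
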